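(* $E_{range}$ and $E_0$ are learn-incomparable: there is a family of structures that is $E_0$-learnable but not $E_{range}$-learnable, and there is a family of structures that is $E_{range}$-learnable but not $E_0$-learnable (for instance the family of graphs $\{\mathsf{R}_n\oplus\mathsf{I}:n\geq 2\}\cup\{\mathsf{R}\oplus\mathsf{I}\}$).
   Context: All structures are countable, have domain $\mathbb{N}$, are in a finite relational signature, and are identified with their atomic diagrams (elements of $2^{\mathbb{N}}$). A family of structures is a countable set of pairwise nonisomorphic such structures. $\mathrm{LD}(\mathfrak{K})\subseteq 2^{\mathbb{N}}$ is the set of structures with domain $\mathbb{N}$ isomorphic to a member of $\mathfrak{K}$ (subspace topology). For an equivalence relation $E$ on a space $X$, $\mathfrak{K}$ is $E$-learnable if there is a continuous $\Gamma:\mathrm{LD}(\mathfrak{K})\to X$ with $\mathcal{S}\cong\mathcal{S}'\iff\Gamma(\mathcal{S})\,E\,\Gamma(\mathcal{S}')$ for all $\mathcal{S},\mathcal{S}'\in\mathrm{LD}(\mathfrak{K})$. On Baire space $\mathbb{N}^{\mathbb{N}}$: $p\,E_0\,q\iff\exists m\,\forall n\ge m\ p(n)=q(n)$; $p\,E_{range}\,q\iff\{p(m):m\}=\{q(m):m\}$. Graphs are undirected without self-loops. $\mathsf{R}$ is the graph on $\mathbb{N}$ with edges $\{i,i+1\}$; $\mathsf{I}$ is the graph on $\mathbb{N}$ with no edges; for $n\ge2$, $\mathsf{R}_n$ is the graph on $\{0,\dots,n-1\}$ with edges $\{i,i+1\}$, $i<n-1$; $G_0\oplus G_1$ is the disjoint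 union of graphs (re-indexed to have domain $\mathbb{N}$). *)

theory Defs
  imports "HOL-Analysis.Analysis"
begin

text \<open>Structures on domain nat in a finite relational signature sig (list of arities).
  A structure is identified with its atomic diagram: the set of true atomic facts
  R_i(t), encoded as a predicate on pairs (i, t) with t a tuple of naturals.
  The space of all such predicates carries the product topology of discrete bool,
  i.e. it is (a copy of) Cantor space 2^N via a numbering of the countably many facts.\<close>

type_synonym struc = "nat \<times> nat list \<Rightarrow> bool"

definition is_struc :: "nat list \<Rightarrow> struc \<Rightarrow> bool" where
  "is_struc sig S \<longleftrightarrow> (\<forall>i t. S (i, t) \<longrightarrow> i < length sig \<and> length t = sig ! i)"

definition iso :: "struc \<Rightarrow> struc \<Rightarrow> bool" where
  "iso S S' \<longleftrightarrow> (\<exists>f::nat \<Rightarrow> nat. bij f \<and> (\<forall>i t. S (i, t) \<longleftrightarrow> S' (i, map f t)))"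

definition family :: "nat list \<Rightarrow> struc set \<Rightarrow> bool" where
  "family sig K \<longleftrightarrow> countable K \<and> (\<forall>S\<in>K. is_struc sig S)
      \<and> (\<forall>S\<in>K. \<forall>S'\<in>K. iso S S' \<longrightarrow> S = S')"

definition LD :: "struc set \<Rightarrow> struc set" where
  "LD K = {S. \<exists>T\<in>K. iso S T}"

definition struc_top :: "struc topology" where
  "struc_top = product_topology (\<lambda>_. discrete_topology UNIV) UNIV"

definition baire :: "(nat \<Rightarrow> nat) topology" where
  "baire = product_topology (\<lambda>_. discrete_topology UNIV) UNIV"

definition learnable :: "'a topology \<Rightarrow> ('a \<Rightarrow> 'a \<Rightarrow> bool) \<Rightarrow> struc set \<Rightarrow> bool" where
  "learnable X E K \<longleftrightarrow> (\<exists>\<Gamma>. continuous_map (subtopology struc_top (LD K)) X \<Gamma>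
      \<and> (\<forall>S\<in>LD K. \<forall>S'\<in>LD K. iso S S' \<longleftrightarrow> E (\<Gamma> S) (\<Gamma> S')))"

definition E0 :: "(nat \<Rightarrow> nat) \<Rightarrow> (nat \<Rightarrow> nat) \<Rightarrow> bool" where
  "E0 p q \<longleftrightarrow> (\<exists>m. \<forall>n\<ge>m. p n = q n)"

definition Erange :: "(nat \<Rightarrow> nat) \<Rightarrow> (nat \<Rightarrow> nat) \<Rightarrow> bool" where
  "Erange p q \<longleftrightarrow> range p = range q"

definition graph_struc :: "(nat \<Rightarrow> nat \<Rightarrow> bool) \<Rightarrow> struc" where
  "graph_struc E = (\<lambda>(i, t). i = 0 \<and> (\<exists>a b. t = [a, b] \<and> E a b))"

text \<open>R_n (+) I, re-indexed: path on 0..n-1, all other vertices isolated.\<close>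
definition RnI :: "nat \<Rightarrow> struc" where
  "RnI n = graph_struc (\<lambda>a b. a < n \<and> b < n \<and> (a + 1 = b \<or> b + 1 = a))"

text \<open>R (+) I, re-indexed: infinite path on the even numbers, odd numbers isolated.\<close>
definition RI :: struc where
  "RI = graph_struc (\<lambda>a b. even a \<and> even b \<and> (a + 2 = b \<or> b + 2 = a))"

end

theory Submission
  imports Defs "HOL-Library.Countable"
begin

lemma cont_fin:
  assumes "finite F" and dep: "\<And>S S'. (\<forall>x\<in>F. S x = S' x) \<Longrightarrow> g S = g S'"
  shows "continuous_map struc_top (discrete_topology UNIV) g"
  unfolding continuous_map_def
proof (intro conjI allI impI)
  show "g \<in> topspace struc_top \<rightarrow> topspace (discrete_topology UNIV)" by simp
  fix U
  show "openin struc_top {x \<in> topspace struc_top. g x \<in> U}"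
    unfolding struc_top_def openin_product_topology_alt
  proof (intro ballI)
    fix S0 assume S0: "S0 \<in> {x \<in> topspace (product_topology (\<lambda>_. discrete_topology UNIV) UNIV). g x \<in> U}"
    define V where "V = (\<lambda>i. if i \<in> F then {S0 i} else (UNIV::bool set))"
    have "{i \<in> UNIV. V i \<noteq> topspace (discrete_topology UNIV)} \<subseteq> F" by (auto simp: V_def)
    hence f1: "finite {i \<in> UNIV. V i \<noteq> topspace (discrete_topology UNIV)}" using assms(1) finite_subset by blast
    have f2: "S0 \<in> Pi\<^sub>E UNIV V" by (auto simp: V_def PiE_UNIV_domain)
    have f3: "Pi\<^sub>E UNIV V \<subseteq> {x \<in> topspace (product_topology (\<lambda>_. discrete_topology UNIV) UNIV). g x \<in> U}"
    proof
      fix S assume "S \<in> Pi\<^sub>E UNIV V"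
      hence "\<forall>i. S i \<in> V i" unfolding PiE_UNIV_domain Pi_iff by blast
      hence "\<forall>x\<in>F. S x = S0 x" unfolding V_def by (metis singletonD)
      hence "g S = g S0" using dep by metis
      thus "S \<in> {x \<in> topspace (product_topology (\<lambda>_. discrete_topology UNIV) UNIV). g x \<in> U}"
        using S0 by (simp add: PiE_UNIV_domain)
    qed
    have f4: "\<forall>i\<in>UNIV. openin (discrete_topology UNIV) (V i)" by simp
    show "\<exists>V. finite {i \<in> UNIV. V i \<noteq> topspace (discrete_topology UNIV)} \<and>
             (\<forall>i\<in>UNIV. openin (discrete_topology UNIV) (V i)) \<and> S0 \<in> Pi\<^sub>E UNIV V \<and>
             Pi\<^sub>E UNIV V \<subseteq> {x \<in> topspace (product_topology (\<lambda>_. discrete_topology UNIV) UNIV). g x \<in> U}"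
      by (intro exI[of _ V] conjI f1 f2 f3 f4)
  qed
qed

lemma learner_cont:
  assumes "\<And>m. finite (F m)" and "\<And>m S S'. (\<forall>x\<in>F m. S x = S' x) \<Longrightarrow> \<Gamma> S m = \<Gamma> S' m"
  shows "continuous_map (subtopology struc_top L) baire \<Gamma>"
  unfolding baire_def continuous_map_componentwise_UNIV
proof
  fix m
  have "continuous_map struc_top (discrete_topology UNIV) (\<lambda>S. \<Gamma> S m)"
    by (rule cont_fin[of "F m"]) (use assms in auto)
  thus "continuous_map (subtopology struc_top L) (discrete_topology UNIV) (\<lambda>S. \<Gamma> S m)"
    by (rule continuous_map_from_subtopology)
qed

lemma local_nbhd:
  assumes cont: "continuous_map (subtopology struc_top L) baire \<Gamma>" and T: "T \<in> L"
  shows "\<exists>F. finite F \<and> (\<forall>S\<in>L. (\<forall>x\<in>F. S x = T x) \<longrightarrow> \<Gamma> S m = \<Gamma> T m)"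
proof -
  have c: "continuous_map (subtopology struc_top L) (discrete_topology UNIV) (\<lambda>S. \<Gamma> S m)"
    using cont unfolding baire_def continuous_map_componentwise_UNIV by blast
  have "openin (subtopology struc_top L) {x \<in> topspace (subtopology struc_top L). \<Gamma> x m \<in> {\<Gamma> T m}}"
    using c unfolding continuous_map_def by (elim conjE allE[of _ "{\<Gamma> T m}"]) simp
  then obtain U where U: "openin struc_top U"
     and eq: "{x \<in> topspace (subtopology struc_top L). \<Gamma> x m \<in> {\<Gamma> T m}} = U \<inter> L"
    unfolding openin_subtopology by blast
  have tsp: "topspace (subtopology struc_top L) = L"
    by (simp add: struc_top_def PiE_UNIV_domain)
  have "T \<in> U" using eq T tsp by auto
  then obtain V where V: "finite {i \<in> UNIV. V i \<noteq> topspace (discrete_topology (UNIV::bool set))}"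
      "T \<in> Pi\<^sub>E UNIV V" "Pi\<^sub>E UNIV V \<subseteq> U"
    using U unfolding struc_top_def openin_product_topology_alt by blast
  define F where "F = {i \<in> UNIV. V i \<noteq> topspace (discrete_topology (UNIV::bool set))}"
  have "\<forall>S\<in>L. (\<forall>x\<in>F. S x = T x) \<longrightarrow> \<Gamma> S m = \<Gamma> T m"
  proof (intro ballI impI)
    fix S assume S: "S \<in> L" "\<forall>x\<in>F. S x = T x"
    have "S \<in> Pi\<^sub>E UNIV V"
    proof -
      { fix i have "S i \<in> V i"
        proof (cases "i \<in> F")
          case True thus ?thesis using S V(2) by (auto simp: PiE_UNIV_domain)
        next
          case False thus ?thesis by (auto simp: F_def)
        qed }
      thus ?thesis by (simp add: PiE_UNIV_domain)
    qed
    hence "S \<in> U \<inter> L" using V(3) S by auto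
    thus "\<Gamma> S m = \<Gamma> T m" using eq tsp by auto
  qed
  moreover have "finite F" using V(1) unfolding F_def .
  ultimately show ?thesis by (intro exI[of _ F] conjI)
qed

lemma iso_refl: "iso S S"
  unfolding iso_def by (rule exI[of _ id]) simp

lemma iso_sym: assumes "iso S S'" shows "iso S' S"
proof -
  obtain f where f: "bij f" "\<forall>i t. S (i, t) \<longleftrightarrow> S' (i, map f t)" using assms iso_def by blast
  have "bij (inv f)" using f(1) by (simp add: bij_imp_bij_inv)
  moreover have "\<forall>i t. S' (i, t) \<longleftrightarrow> S (i, map (inv f) t)"
  proof (intro allI)
    fix i t
    have "map f (map (inv f) t) = t" using f(1) by (simp add: bij_is_surj surj_f_inv_f map_idI)
    thus "S' (i, t) \<longleftrightarrow> S (i, map (inv f) t)" using f(2) by metis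
  qed
  ultimately show ?thesis unfolding iso_def by blast
qed

lemma iso_trans: assumes "iso S S'" "iso S' S''" shows "iso S S''"
proof -
  obtain f where f: "bij f" "\<forall>i t. S (i, t) \<longleftrightarrow> S' (i, map f t)" using assms(1) iso_def by blast
  obtain g where g: "bij g" "\<forall>i t. S' (i, t) \<longleftrightarrow> S'' (i, map g t)" using assms(2) iso_def by blast
  have "bij (g \<circ> f)" using f(1) g(1) by (simp add: bij_comp)
  moreover have "\<forall>i t. S (i, t) \<longleftrightarrow> S'' (i, map (g \<circ> f) t)" using f(2) g(2) by simp
  ultimately show ?thesis unfolding iso_def by blast
qed

lemma map_eq_two: "map f t = [x, y] \<longleftrightarrow> (\<exists>a b. t = [a, b] \<and> x = f a \<and> y = f b)"
  by (cases t; cases "tl t"; auto)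

lemma graph_iso:
  assumes "bij f" "\<And>a b. E a b \<longleftrightarrow> E' (f a) (f b)"
  shows "iso (graph_struc E) (graph_struc E')"
  unfolding iso_def
proof (intro exI[of _ f] conjI allI)
  show "bij f" by fact
  fix i t
  show "graph_struc E (i, t) = graph_struc E' (i, map f t)"
    unfolding graph_struc_def using assms(2) by (auto simp: map_eq_two)
qed

lemma iso_graph_form:
  assumes "iso S (graph_struc E)"
  shows "\<exists>f. bij f \<and> S = graph_struc (\<lambda>a b. E (f a) (f b))"
proof -
  obtain f where f: "bij f" "\<forall>i t. S (i, t) \<longleftrightarrow> graph_struc E (i, map f t)" using assms iso_def by blast
  have "S = graph_struc (\<lambda>a b. E (f a) (f b))"
  proof (rule ext, clarify)
    fix i t
    show "S (i, t) = graph_struc (\<lambda>a b. E (f a) (f b)) (i, t)"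
      using f(2) unfolding graph_struc_def by (auto simp: map_eq_two)
  qed
  thus ?thesis using f(1) by blast
qed

lemma graph_iso_D:
  assumes "iso (graph_struc E) (graph_struc E')"
  shows "\<exists>f. bij f \<and> (\<forall>a b. E a b \<longleftrightarrow> E' (f a) (f b))"
proof -
  obtain f where f: "bij f" "\<forall>i t. graph_struc E (i, t) \<longleftrightarrow> graph_struc E' (i, map f t)"
    using assms iso_def by blast
  have "\<forall>a b. E a b \<longleftrightarrow> E' (f a) (f b)"
  proof (intro allI)
    fix a b show "E a b \<longleftrightarrow> E' (f a) (f b)" using f(2)[rule_format, of 0 "[a,b]"]
      unfolding graph_struc_def by simp
  qed
  thus ?thesis using f(1) by blast
qed

lemma bij_extend:
  assumes "bij_betw g A B" "bij_betw h (-A) (-B)"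
  shows "bij (\<lambda>x. if x \<in> A then g x else h x)"
proof -
  have 1: "bij_betw (\<lambda>x. if x \<in> A then g x else h x) A B"
    using assms(1) by (rule bij_betw_cong[THEN iffD1, rotated]) simp
  have 2: "bij_betw (\<lambda>x. if x \<in> A then g x else h x) (-A) (-B)"
    using assms(2) by (rule bij_betw_cong[THEN iffD1, rotated]) simp
  have "bij_betw (\<lambda>x. if x \<in> A then g x else h x) (A \<union> -A) (B \<union> -B)"
    by (rule bij_betw_combine[OF 1 2]) auto
  thus ?thesis by simp
qed

lemma compl_bij:
  fixes A B :: "nat set"
  assumes "infinite (-A)" "infinite (-B)"
  shows "\<exists>h. bij_betw h (-A) (-B)"
proof -
  have a: "bij_betw (enumerate (-A)) UNIV (-A)" using assms(1) by (rule bij_enumerate)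
  have b: "bij_betw (enumerate (-B)) UNIV (-B)" using assms(2) by (rule bij_enumerate)
  have "bij_betw (inv_into UNIV (enumerate (-A))) (-A) UNIV" using a by (rule bij_betw_inv_into)
  hence "bij_betw (enumerate (-B) \<circ> inv_into UNIV (enumerate (-A))) (-A) (-B)"
    using b by (rule bij_betw_trans)
  thus ?thesis by blast
qed

lemma fin_bound:
  assumes "finite (F :: (nat \<times> nat list) set)"
  shows "\<exists>B. \<forall>x\<in>F. \<forall>v\<in>set (snd x). v \<le> B"
proof -
  define B where "B = Max (insert 0 (\<Union>x\<in>F. set (snd x)))"
  have "finite (insert 0 (\<Union>x\<in>F. set (snd x)))" using assms by simp
  hence "\<forall>x\<in>F. \<forall>v\<in>set (snd x). v \<le> B" unfolding B_def by (auto intro: Max_ge)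
  thus ?thesis by blast
qed

lemma graph_agree:
  assumes "\<And>a c. a \<le> B \<Longrightarrow> c \<le> B \<Longrightarrow> E a c \<longleftrightarrow> E' a c" "\<forall>v\<in>set (snd x). v \<le> B"
  shows "graph_struc E x = graph_struc E' x"
  using assms unfolding graph_struc_def by (cases x) auto

lemma graph_simp[simp]: "graph_struc E (0, [x, y]) = E x y"
  by (simp add: graph_struc_def)

lemma is_struc_graph: "is_struc [2] (graph_struc E)"
  unfolding is_struc_def graph_struc_def by auto

section \<open>Part 1: omega vs omega*\<close>

definition Lw :: struc where "Lw = graph_struc (\<lambda>a b. a < b)"
definition Lr :: struc where "Lr = graph_struc (\<lambda>a b. b < a)"
definition K1 :: "struc set" where "K1 = {Lw, Lr}"

definition ok1 :: "struc \<Rightarrow> nat \<Rightarrow> nat \<Rightarrow> nat \<Rightarrow> bool" where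
  "ok1 S n a b \<longleftrightarrow> (\<forall>c\<le>n. c \<noteq> a \<longrightarrow> S (0, [a, c])) \<and> (\<forall>c\<le>n. c \<noteq> b \<longrightarrow> S (0, [c, b]))"

definition G1 :: "struc \<Rightarrow> nat \<Rightarrow> nat" where
  "G1 S n = (if \<exists>a b. a < b \<and> b \<le> n \<and> ok1 S n a b then 0 else 1)"

lemma core:
  assumes "bij (f :: nat \<Rightarrow> nat)"
  shows "\<exists>M. inv f 0 < M \<and> (\<forall>v \<le> inv f 0. f v < f M)"
proof -
  define m0 where "m0 = inv f 0"
  define w where "w = Suc (Max (f ` {..m0}))"
  define M where "M = inv f w"
  have fM: "f M = w" unfolding M_def using assms by (simp add: bij_is_surj surj_f_inv_f)
  have lt: "\<forall>v \<le> m0. f v < f M"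
  proof (intro allI impI)
    fix v assume "v \<le> m0"
    hence "f v \<le> Max (f ` {..m0})" by (intro Max_ge) auto
    thus "f v < f M" using fM w_def by simp
  qed
  have "m0 < M"
  proof (rule ccontr)
    assume "\<not> m0 < M" hence "M \<le> m0" by simp
    thus False using lt by auto
  qed
  thus ?thesis using lt m0_def by blast
qed

lemma evA:
  assumes f: "bij (f :: nat \<Rightarrow> nat)"
  shows "\<exists>N. \<forall>n\<ge>N. G1 (graph_struc (\<lambda>a b. f a < f b)) n = 0"
proof -
  obtain M where M: "inv f 0 < M" "\<forall>v \<le> inv f 0. f v < f M" using core[OF f] by blast
  have "G1 (graph_struc (\<lambda>a b. f a < f b)) n = 0" if n: "n \<ge> M" for n
  proof -
    define m0 where "m0 = inv f 0"
    have fm0: "f m0 = 0" unfolding m0_def using f by (simp add: bij_is_surj surj_f_inv_f)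
    have inj: "inj f" using f bij_is_inj by blast
    have "Max (f ` {..n}) \<in> f ` {..n}" by (intro Max_in) auto
    then obtain b where b0: "b \<in> {..n}" "Max (f ` {..n}) = f b" by (rule imageE)
    hence b: "b \<le> n" "f b = Max (f ` {..n})" by auto
    have bmax: "\<forall>c\<le>n. c \<noteq> b \<longrightarrow> f c < f b"
    proof (intro allI impI)
      fix c assume "c \<le> n" "c \<noteq> b"
      have "f c \<le> f b" using b \<open>c \<le> n\<close> by (auto intro: Max_ge)
      moreover have "f c \<noteq> f b" using inj \<open>c \<noteq> b\<close> by (metis injD)
      ultimately show "f c < f b" by simp
    qed
    have "f M \<le> f b" using b n by (auto intro: Max_ge)
    hence "m0 < b" using M m0_def by (metis leD not_le_imp_less order.strict_trans2)
    moreover have "\<forall>c\<le>n. c \<noteq> m0 \<longrightarrow> f m0 < f c"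
    proof (intro allI impI)
      fix c assume "c \<noteq> m0"
      hence "f c \<noteq> f m0" using inj by (auto dest: injD)
      thus "f m0 < f c" using fm0 by simp
    qed
    ultimately have "m0 < b \<and> b \<le> n \<and> ok1 (graph_struc (\<lambda>a b. f a < f b)) n m0 b"
      using b bmax unfolding ok1_def by simp
    thus ?thesis unfolding G1_def by auto
  qed
  thus ?thesis by blast
qed

lemma evB:
  assumes f: "bij (f :: nat \<Rightarrow> nat)"
  shows "\<exists>N. \<forall>n\<ge>N. G1 (graph_struc (\<lambda>a b. f b < f a)) n = 1"
proof -
  obtain M where M: "inv f 0 < M" "\<forall>v \<le> inv f 0. f v < f M" using core[OF f] by blast
  have "G1 (graph_struc (\<lambda>a b. f b < f a)) n = 1" if n: "n \<ge> M" for n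
  proof -
    define m0 where "m0 = inv f 0"
    have fm0: "f m0 = 0" unfolding m0_def using f by (simp add: bij_is_surj surj_f_inv_f)
    have "\<not> (a < b \<and> b \<le> n \<and> ok1 (graph_struc (\<lambda>a b. f b < f a)) n a b)" for a b
    proof
      assume h: "a < b \<and> b \<le> n \<and> ok1 (graph_struc (\<lambda>a b. f b < f a)) n a b"
      have "m0 \<le> n" using M n m0_def by simp
      have bm: "b = m0"
      proof (rule ccontr)
        assume "b \<noteq> m0"
        hence "f b < f m0" using h \<open>m0 \<le> n\<close> unfolding ok1_def by simp
        thus False using fm0 by simp
      qed
      have "M \<le> n" "M \<noteq> a" using n h bm M m0_def by auto
      hence "f M < f a" using h unfolding ok1_def by simp
      moreover have "f a < f M" using M h bm m0_def by simp
      ultimately show False by simp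
    qed
    thus ?thesis unfolding G1_def by auto
  qed
  thus ?thesis by blast
qed

lemma Lw_not_Lr: "\<not> iso Lw Lr"
proof
  assume "iso Lw Lr"
  then obtain f :: "nat \<Rightarrow> nat" where f: "bij f" "\<forall>a b. (a::nat) < b \<longleftrightarrow> f b < f a"
    unfolding Lw_def Lr_def using graph_iso_D by blast
  define a0 where "a0 = inv f 0"
  have "f a0 = 0" unfolding a0_def using f(1) by (simp add: bij_is_surj surj_f_inv_f)
  moreover have "f (Suc a0) < f a0" using f(2) by simp
  ultimately show False by simp
qed

lemma LD_K1: "S \<in> LD K1 \<longleftrightarrow> iso S Lw \<or> iso S Lr"
  unfolding LD_def K1_def by auto

definition typ1 :: "struc \<Rightarrow> nat" where "typ1 S = (if iso S Lw then 0 else 1)"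

lemma typ1_ev: assumes "S \<in> LD K1" shows "\<exists>N. \<forall>n\<ge>N. G1 S n = typ1 S"
proof (cases "iso S Lw")
  case True
  have "\<exists>f::nat\<Rightarrow>nat. bij f \<and> S = graph_struc (\<lambda>a b. f a < f b)"
    using iso_graph_form[of S "\<lambda>a b. a < b"] True unfolding Lw_def by simp
  then obtain f :: "nat \<Rightarrow> nat" where "bij f" "S = graph_struc (\<lambda>a b. f a < f b)" by blast
  thus ?thesis using evA True typ1_def by simp
next
  case False
  hence "iso S Lr" using assms LD_K1 by blast
  have "\<exists>f::nat\<Rightarrow>nat. bij f \<and> S = graph_struc (\<lambda>a b. f b < f a)"
    using iso_graph_form[of S "\<lambda>a b. b < a"] \<open>iso S Lr\<close> unfolding Lr_def by simp
  then obtain f :: "nat \<Rightarrow> nat" where "bij f" "S = graph_struc (\<lambda>a b. f b < f a)" by blast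
  thus ?thesis using evB False typ1_def by simp
qed

lemma typ1_iso: assumes "S \<in> LD K1" "S' \<in> LD K1" shows "iso S S' \<longleftrightarrow> typ1 S = typ1 S'"
proof
  assume i: "iso S S'"
  show "typ1 S = typ1 S'"
  proof (cases "iso S Lw")
    case True
    hence "iso S' Lw" using i iso_sym iso_trans by blast
    thus ?thesis using True typ1_def by simp
  next
    case False
    have "\<not> iso S' Lw" using False i iso_trans by blast
    thus ?thesis using False typ1_def by simp
  qed
next
  assume t: "typ1 S = typ1 S'"
  show "iso S S'"
  proof (cases "iso S Lw")
    case True
    hence "iso S' Lw" using t typ1_def by (auto split: if_splits)
    thus ?thesis using True iso_sym iso_trans by blast
  next
    case False
    hence "\<not> iso S' Lw" using t typ1_def by (auto split: if_splits)
    hence "iso S Lr" "iso S' Lr" using False assms LD_K1 by auto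
    thus ?thesis using iso_sym iso_trans by blast
  qed
qed

lemma ok1_cong:
  assumes "\<forall>x\<in>(\<lambda>p. (0::nat, [fst p, snd p])) ` ({..n} \<times> {..n}). S x = S' x" "a \<le> n" "b \<le> n"
  shows "ok1 S n a b = ok1 S' n a b"
proof -
  have h: "\<And>x y. x \<le> n \<Longrightarrow> y \<le> n \<Longrightarrow> S (0, [x, y]) = S' (0, [x, y])"
    using assms(1) by force
  show ?thesis unfolding ok1_def using h assms(2,3) by auto
qed

lemma G1_cont: "continuous_map (subtopology struc_top L) baire G1"
proof (rule learner_cont[of "\<lambda>n. (\<lambda>p. (0::nat, [fst p, snd p])) ` ({..n} \<times> {..n})"])
  fix n :: nat show "finite ((\<lambda>p. (0::nat, [fst p, snd p])) ` ({..n} \<times> {..n}))"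
    by (intro finite_imageI finite_cartesian_product) auto
next
  fix n :: nat and S S' :: struc
  assume h: "\<forall>x\<in>(\<lambda>p. (0::nat, [fst p, snd p])) ` ({..n} \<times> {..n}). S x = S' x"
  have "(\<exists>a b. a < b \<and> b \<le> n \<and> ok1 S n a b) = (\<exists>a b. a < b \<and> b \<le> n \<and> ok1 S' n a b)"
    using ok1_cong[OF h] by (meson less_imp_le_nat order.trans)
  thus "G1 S n = G1 S' n" unfolding G1_def by simp
qed

lemma E0_learn_K1: "learnable baire E0 K1"
  unfolding learnable_def
proof (intro exI[of _ G1] conjI ballI)
  show "continuous_map (subtopology struc_top (LD K1)) baire G1" by (rule G1_cont)
  fix S S' assume S: "S \<in> LD K1" and S': "S' \<in> LD K1"
  obtain N where N: "\<forall>n\<ge>N. G1 S n = typ1 S" using typ1_ev[OF S] by blast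
  obtain N' where N': "\<forall>n\<ge>N'. G1 S' n = typ1 S'" using typ1_ev[OF S'] by blast
  have "E0 (G1 S) (G1 S') \<longleftrightarrow> typ1 S = typ1 S'"
  proof
    assume "E0 (G1 S) (G1 S')"
    then obtain m where m: "\<forall>n\<ge>m. G1 S n = G1 S' n" unfolding E0_def by blast
    have "G1 S (max m (max N N')) = G1 S' (max m (max N N'))" using m by simp
    thus "typ1 S = typ1 S'" using N N' by simp
  next
    assume "typ1 S = typ1 S'"
    hence "\<forall>n\<ge>max N N'. G1 S n = G1 S' n" using N N' by simp
    thus "E0 (G1 S) (G1 S')" unfolding E0_def by blast
  qed
  thus "iso S S' \<longleftrightarrow> E0 (G1 S) (G1 S')" using typ1_iso[OF S S'] by simp
qed

lemma transfer_range:
  assumes cont: "continuous_map (subtopology struc_top L) baire \<Gamma>"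
    and iff: "\<forall>S\<in>L. \<forall>S'\<in>L. iso S S' \<longleftrightarrow> Erange (\<Gamma> S) (\<Gamma> S')"
    and T: "T \<in> L" and T': "T' \<in> L"
    and ext: "\<And>B. \<exists>S\<in>L. iso S T' \<and> (\<forall>x. (\<forall>v\<in>set (snd x). v \<le> B) \<longrightarrow> S x = T x)"
  shows "range (\<Gamma> T) \<subseteq> range (\<Gamma> T')"
proof
  fix y assume "y \<in> range (\<Gamma> T)"
  then obtain m where y: "y = \<Gamma> T m" by auto
  obtain F where F: "finite F" "\<forall>S\<in>L. (\<forall>x\<in>F. S x = T x) \<longrightarrow> \<Gamma> S m = \<Gamma> T m"
    using local_nbhd[OF cont T] by blast
  obtain B where B: "\<forall>x\<in>F. \<forall>v\<in>set (snd x). v \<le> B" using fin_bound[OF F(1)] by blast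
  obtain S where S: "S \<in> L" "iso S T'" "\<forall>x. (\<forall>v\<in>set (snd x). v \<le> B) \<longrightarrow> S x = T x"
    using ext by blast
  have "\<Gamma> S m = y" using F(2) S B y by blast
  moreover have "range (\<Gamma> S) = range (\<Gamma> T')" using iff S T' unfolding Erange_def by blast
  ultimately show "y \<in> range (\<Gamma> T')" by (metis rangeI)
qed

definition gB :: "nat \<Rightarrow> nat \<Rightarrow> nat" where "gB B x = (if x \<le> B then B - x else x)"

lemma gB_bij: "bij (gB B)"
  by (rule o_bij[of "gB B"]) (auto simp: gB_def fun_eq_iff)

lemma not_Erange_K1: "\<not> learnable baire Erange K1"
proof
  assume "learnable baire Erange K1"
  then obtain \<Gamma> where cont: "continuous_map (subtopology struc_top (LD K1)) baire \<Gamma>"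
    and iff: "\<forall>S\<in>LD K1. \<forall>S'\<in>LD K1. iso S S' \<longleftrightarrow> Erange (\<Gamma> S) (\<Gamma> S')"
    unfolding learnable_def by blast
  have w: "Lw \<in> LD K1" and r: "Lr \<in> LD K1" using LD_K1 iso_refl by auto
  have "range (\<Gamma> Lw) \<subseteq> range (\<Gamma> Lr)"
  proof (rule transfer_range[OF cont iff w r])
    fix B
    define S where "S = graph_struc (\<lambda>a c. gB B c < gB B a)"
    have i: "iso S Lr" unfolding S_def Lr_def by (rule graph_iso[OF gB_bij]) simp
    have "\<forall>x. (\<forall>v\<in>set (snd x). v \<le> B) \<longrightarrow> S x = Lw x"
      unfolding S_def Lw_def by (intro allI impI graph_agree[of B]) (auto simp: gB_def)
    thus "\<exists>S\<in>LD K1. iso S Lr \<and> (\<forall>x. (\<forall>v\<in>set (snd x). v \<le> B) \<longrightarrow> S x = Lw x)"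
      using i LD_K1 by blast
  qed
  moreover have "range (\<Gamma> Lr) \<subseteq> range (\<Gamma> Lw)"
  proof (rule transfer_range[OF cont iff r w])
    fix B
    define S where "S = graph_struc (\<lambda>a c. gB B a < gB B c)"
    have i: "iso S Lw" unfolding S_def Lw_def by (rule graph_iso[OF gB_bij]) simp
    have "\<forall>x. (\<forall>v\<in>set (snd x). v \<le> B) \<longrightarrow> S x = Lr x"
      unfolding S_def Lr_def by (intro allI impI graph_agree[of B]) (auto simp: gB_def)
    thus "\<exists>S\<in>LD K1. iso S Lw \<and> (\<forall>x. (\<forall>v\<in>set (snd x). v \<le> B) \<longrightarrow> S x = Lr x)"
      using i LD_K1 by blast
  qed
  ultimately have "Erange (\<Gamma> Lw) (\<Gamma> Lr)" unfolding Erange_def by blast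
  hence "iso Lw Lr" using iff w r by blast
  thus False using Lw_not_Lr by blast
qed

lemma family_K1: "family [2] K1"
proof -
  have "is_struc [2] Lw" "is_struc [2] Lr" unfolding Lw_def Lr_def by (rule is_struc_graph)+
  thus ?thesis unfolding family_def K1_def using Lw_not_Lr iso_sym by auto
qed

lemma part1: "\<exists>sig K. family sig K \<and> learnable baire E0 K \<and> \<not> learnable baire Erange K"
  using family_K1 E0_learn_K1 not_Erange_K1 by blast

definition K3 :: "struc set" where "K3 = RnI ` {n. n \<ge> 2} \<union> {RI}"

definition good :: "struc \<Rightarrow> nat \<Rightarrow> bool" where
  "good S k \<longleftrightarrow> (\<exists>ps::(nat \<times> nat) list. length ps = k \<and> distinct (map fst ps)
      \<and> (\<forall>p\<in>set ps. S (0, [fst p, snd p])))"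

definition G3 :: "struc \<Rightarrow> nat \<Rightarrow> nat" where
  "G3 S m = (if distinct (map fst (from_nat m :: (nat \<times> nat) list))
      \<and> (\<forall>p\<in>set (from_nat m :: (nat \<times> nat) list). S (0, [fst p, snd p]))
     then Suc (length (from_nat m :: (nat \<times> nat) list)) else 0)"

lemma G3_range: "range (G3 S) = insert 0 (Suc ` {k. good S k})"
proof (rule set_eqI)
  fix y
  show "y \<in> range (G3 S) \<longleftrightarrow> y \<in> insert 0 (Suc ` {k. good S k})"
  proof
    assume "y \<in> range (G3 S)"
    then obtain m where m: "y = G3 S m" by auto
    show "y \<in> insert 0 (Suc ` {k. good S k})"
    proof (cases "y = 0")
      case False
      hence "distinct (map fst (from_nat m :: (nat \<times> nat) list))
        \<and> (\<forall>p\<in>set (from_nat m :: (nat \<times> nat) list). S (0, [fst p, snd p]))"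
        "y = Suc (length (from_nat m :: (nat \<times> nat) list))"
        using m unfolding G3_def by (auto split: if_splits)
      hence "good S (length (from_nat m :: (nat \<times> nat) list))" unfolding good_def by blast
      thus ?thesis using \<open>y = Suc _\<close> by blast
    qed simp
  next
    assume "y \<in> insert 0 (Suc ` {k. good S k})"
    then consider "y = 0" | k where "y = Suc k" "good S k" by auto
    thus "y \<in> range (G3 S)"
    proof cases
      case 1
      have "G3 S (to_nat [(0::nat, 0::nat), (0, 0)]) = 0" unfolding G3_def by simp
      thus ?thesis using 1 by (metis rangeI)
    next
      case 2
      then obtain ps :: "(nat \<times> nat) list" where ps: "length ps = k" "distinct (map fst ps)"
        "\<forall>p\<in>set ps. S (0, [fst p, snd p])" unfolding good_def by blast
      have "G3 S (to_nat ps) = y" unfolding G3_def using ps 2 by simp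
      thus ?thesis by (metis rangeI)
    qed
  qed
qed

lemma good_iso1: assumes "iso S S'" "good S k" shows "good S' k"
proof -
  obtain f where f: "bij f" "\<forall>i t. S (i, t) \<longleftrightarrow> S' (i, map f t)" using assms(1) iso_def by blast
  obtain ps :: "(nat \<times> nat) list" where ps: "length ps = k" "distinct (map fst ps)"
    "\<forall>p\<in>set ps. S (0, [fst p, snd p])" using assms(2) unfolding good_def by blast
  define qs where "qs = map (\<lambda>p. (f (fst p), f (snd p))) ps"
  have "length qs = k" using ps qs_def by simp
  moreover have "map fst qs = map f (map fst ps)" unfolding qs_def by simp
  hence "distinct (map fst qs)" using ps(2) f(1) bij_is_inj
    by (metis distinct_map inj_on_subset subset_UNIV)
  moreover have "\<forall>p\<in>set qs. S' (0, [fst p, snd p])"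
  proof
    fix q assume "q \<in> set qs"
    then obtain p where "p \<in> set ps" "q = (f (fst p), f (snd p))" unfolding qs_def by auto
    thus "S' (0, [fst q, snd q])" using ps(3) f(2)[rule_format, of 0 "[fst p, snd p]"] by simp
  qed
  ultimately show ?thesis unfolding good_def by blast
qed

lemma good_iso: "iso S S' \<Longrightarrow> good S k \<longleftrightarrow> good S' k"
  using good_iso1 iso_sym by blast

lemma good_RnI: assumes "n \<ge> 2" shows "good (RnI n) k \<longleftrightarrow> k \<le> n"
proof
  assume "good (RnI n) k"
  then obtain ps :: "(nat \<times> nat) list" where ps: "length ps = k" "distinct (map fst ps)"
    "\<forall>p\<in>set ps. RnI n (0, [fst p, snd p])" unfolding good_def by blast
  have "set (map fst ps) \<subseteq> {..<n}" using ps(3) unfolding RnI_def by auto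
  hence "card (set (map fst ps)) \<le> n" by (metis card_lessThan card_mono finite_lessThan)
  thus "k \<le> n" using distinct_card[OF ps(2)] ps(1) by simp
next
  assume k: "k \<le> n"
  define ps where "ps = map (\<lambda>i. (i, if i = 0 then 1 else i - 1)) [0..<k]"
  have "length ps = k" unfolding ps_def by simp
  moreover have "map fst ps = [0..<k]" unfolding ps_def by (simp add: comp_def)
  hence "distinct (map fst ps)" by simp
  moreover have "\<forall>p\<in>set ps. RnI n (0, [fst p, snd p])"
    unfolding ps_def RnI_def using k assms by auto
  ultimately show "good (RnI n) k" unfolding good_def by blast
qed

lemma good_RI: "good RI k"
proof -
  define ps where "ps = map (\<lambda>i. (2 * i, 2 * i + 2)) [0..<k]"
  have "length ps = k" unfolding ps_def by simp
  moreover have "map fst ps = map (\<lambda>i. 2 * i) [0..<k]" unfolding ps_def by (simp add: comp_def)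
  hence "distinct (map fst ps)" by (simp add: distinct_map inj_on_def)
  moreover have "\<forall>p\<in>set ps. RI (0, [fst p, snd p])"
    unfolding ps_def RI_def by auto
  ultimately show ?thesis unfolding good_def by blast
qed

lemma K3_distinct:
  assumes "T \<in> K3" "T' \<in> K3" "\<And>k. good T k \<longleftrightarrow> good T' k"
  shows "T = T'"
proof -
  have not: False if "n \<ge> 2" "\<And>k. good (RnI n) k \<longleftrightarrow> good RI k" for n
    using that(2)[of "Suc n"] good_RnI[OF that(1)] good_RI by simp
  show ?thesis
  proof (cases "T = RI")
    case True
    show ?thesis
    proof (cases "T' = RI")
      case False
      then obtain n' where "n' \<ge> 2" "T' = RnI n'" using assms(2) K3_def by auto
      thus ?thesis using not assms(3) True by metis
    qed (use True in simp)
  next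
    case False
    then obtain n where n: "n \<ge> 2" "T = RnI n" using assms(1) K3_def by auto
    show ?thesis
    proof (cases "T' = RI")
      case True
      thus ?thesis using not n assms(3) by metis
    next
      case False
      then obtain n' where n': "n' \<ge> 2" "T' = RnI n'" using assms(2) K3_def by auto
      have "n \<le> n'" using assms(3)[of n] good_RnI n n' by simp
      moreover have "n' \<le> n" using assms(3)[of n'] good_RnI n n' by simp
      ultimately show ?thesis using n n' by simp
    qed
  qed
qed

lemma G3_cont: "continuous_map (subtopology struc_top L) baire G3"
proof (rule learner_cont[of "\<lambda>m. (\<lambda>p. (0::nat, [fst p, snd p])) ` set (from_nat m :: (nat \<times> nat) list)"])
  fix m :: nat show "finite ((\<lambda>p. (0::nat, [fst p, snd p])) ` set (from_nat m :: (nat \<times> nat) list))"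
    by simp
next
  fix m :: nat and S S' :: struc
  assume h: "\<forall>x\<in>(\<lambda>p. (0::nat, [fst p, snd p])) ` set (from_nat m :: (nat \<times> nat) list). S x = S' x"
  have "(\<forall>p\<in>set (from_nat m :: (nat \<times> nat) list). S (0, [fst p, snd p]))
      = (\<forall>p\<in>set (from_nat m :: (nat \<times> nat) list). S' (0, [fst p, snd p]))"
    using h by auto
  thus "G3 S m = G3 S' m" unfolding G3_def by simp
qed

lemma Erange_learn_K3: "learnable baire Erange K3"
  unfolding learnable_def
proof (intro exI[of _ G3] conjI ballI)
  show "continuous_map (subtopology struc_top (LD K3)) baire G3" by (rule G3_cont)
  fix S S' assume S: "S \<in> LD K3" and S': "S' \<in> LD K3"
  obtain T where T: "T \<in> K3" "iso S T" using S LD_def by blast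
  obtain T' where T': "T' \<in> K3" "iso S' T'" using S' LD_def by blast
  have rg: "Erange (G3 S) (G3 S') \<longleftrightarrow> (\<forall>k. good S k \<longleftrightarrow> good S' k)"
  proof
    assume "Erange (G3 S) (G3 S')"
    hence e: "insert 0 (Suc ` {k. good S k}) = insert 0 (Suc ` {k. good S' k})"
      unfolding Erange_def G3_range .
    show "\<forall>k. good S k \<longleftrightarrow> good S' k"
    proof
      fix k
      have "Suc k \<in> insert 0 (Suc ` {k. good S k}) \<longleftrightarrow> Suc k \<in> insert 0 (Suc ` {k. good S' k})"
        using e by simp
      thus "good S k \<longleftrightarrow> good S' k" by auto
    qed
  next
    assume "\<forall>k. good S k \<longleftrightarrow> good S' k"
    hence "{k. good S k} = {k. good S' k}" by blast
    thus "Erange (G3 S) (G3 S')" unfolding Erange_def G3_range by simp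
  qed
  show "iso S S' \<longleftrightarrow> Erange (G3 S) (G3 S')"
  proof
    assume "iso S S'" thus "Erange (G3 S) (G3 S')" using rg good_iso by blast
  next
    assume "Erange (G3 S) (G3 S')"
    hence "\<forall>k. good S k \<longleftrightarrow> good S' k" using rg by blast
    hence "\<And>k. good T k \<longleftrightarrow> good T' k" using good_iso T(2) T'(2) by blast
    hence "T = T'" using K3_distinct T(1) T'(1) by blast
    thus "iso S S'" using T T' iso_sym iso_trans by blast
  qed
qed

lemma family_K3: "family [2] K3"
  unfolding family_def
proof (intro conjI ballI impI)
  show "countable K3" unfolding K3_def by simp
next
  fix S assume "S \<in> K3"
  thus "is_struc [2] S" unfolding K3_def RnI_def RI_def using is_struc_graph by auto
next
  fix S S' assume "S \<in> K3" "S' \<in> K3" "iso S S'"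
  thus "S = S'" using K3_distinct good_iso by blast
qed

lemma infinite_compl_finite: "finite (A :: nat set) \<Longrightarrow> infinite (-A)"
  using finite_Un infinite_UNIV_nat by (metis Compl_partition)

lemma mk_bij:
  fixes c \<phi> :: "nat \<Rightarrow> nat"
  assumes "inj_on c I" "inj_on \<phi> I" "infinite (-(c ` I))" "infinite (-(\<phi> ` I))"
  shows "\<exists>f. bij f \<and> (\<forall>i\<in>I. f (c i) = \<phi> i) \<and> (\<forall>x. x \<notin> c ` I \<longrightarrow> f x \<notin> \<phi> ` I)"
proof -
  obtain h where h: "bij_betw h (-(c ` I)) (-(\<phi> ` I))" using compl_bij[OF assms(3,4)] by blast
  have "bij_betw (the_inv_into I c) (c ` I) I"
    using assms(1) by (simp add: bij_betw_the_inv_into inj_on_imp_bij_betw)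
  moreover have "bij_betw \<phi> I (\<phi> ` I)" using assms(2) by (simp add: inj_on_imp_bij_betw)
  ultimately have g: "bij_betw (\<phi> \<circ> the_inv_into I c) (c ` I) (\<phi> ` I)" by (rule bij_betw_trans)
  define f where "f = (\<lambda>x. if x \<in> c ` I then (\<phi> \<circ> the_inv_into I c) x else h x)"
  have "bij f" unfolding f_def by (rule bij_extend[OF g h])
  moreover have "\<forall>i\<in>I. f (c i) = \<phi> i" unfolding f_def using assms(1) by (simp add: the_inv_into_f_f)
  moreover have "\<forall>x. x \<notin> c ` I \<longrightarrow> f x \<notin> \<phi> ` I"
    unfolding f_def using h bij_betwE by fastforce
  ultimately show ?thesis by blast
qed

definition PT :: "(nat \<Rightarrow> nat) \<Rightarrow> nat \<Rightarrow> struc" where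
  "PT c L = graph_struc (\<lambda>a b. \<exists>i<L. (a = c i \<and> b = c (Suc i)) \<or> (b = c i \<and> a = c (Suc i)))"

definition PI :: "(nat \<Rightarrow> nat) \<Rightarrow> struc" where
  "PI c = graph_struc (\<lambda>a b. \<exists>i. (a = c i \<and> b = c (Suc i)) \<or> (b = c i \<and> a = c (Suc i)))"

lemma PT_iso:
  assumes c: "strict_mono c"
  shows "iso (PT c L) (RnI (Suc L))"
proof -
  have ic: "inj_on c {..L}" using strict_mono_imp_inj_on[OF c] by (auto intro: inj_on_subset)
  obtain f where f: "bij f" "\<forall>i\<in>{..L}. f (c i) = id i" "\<forall>x. x \<notin> c ` {..L} \<longrightarrow> f x \<notin> id ` {..L}"
    using mk_bij[OF ic, of id] infinite_compl_finite by fastforce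
  have fc: "\<And>i. i \<le> L \<Longrightarrow> f (c i) = i" using f(2) by simp
  have inA: "\<And>x. f x < Suc L \<Longrightarrow> \<exists>i\<le>L. x = c i" using f(3) by force
  show ?thesis unfolding PT_def RnI_def
  proof (rule graph_iso[OF f(1)])
    fix a b
    show "(\<exists>i<L. a = c i \<and> b = c (Suc i) \<or> b = c i \<and> a = c (Suc i)) \<longleftrightarrow>
          (f a < Suc L \<and> f b < Suc L \<and> (f a + 1 = f b \<or> f b + 1 = f a))"
    proof
      assume "\<exists>i<L. a = c i \<and> b = c (Suc i) \<or> b = c i \<and> a = c (Suc i)"
      then obtain i where "i < L" "a = c i \<and> b = c (Suc i) \<or> b = c i \<and> a = c (Suc i)" by blast
      thus "f a < Suc L \<and> f b < Suc L \<and> (f a + 1 = f b \<or> f b + 1 = f a)" using fc by auto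
    next
      assume h: "f a < Suc L \<and> f b < Suc L \<and> (f a + 1 = f b \<or> f b + 1 = f a)"
      obtain i where i: "i \<le> L" "a = c i" using inA h by blast
      obtain j where j: "j \<le> L" "b = c j" using inA h by blast
      have "i + 1 = j \<or> j + 1 = i" using h i j fc by simp
      thus "\<exists>i<L. a = c i \<and> b = c (Suc i) \<or> b = c i \<and> a = c (Suc i)"
        using i j by (metis Suc_eq_plus1 Suc_le_lessD)
    qed
  qed
qed

lemma infinite_odd: "infinite {x::nat. odd x}"
proof -
  have "range (\<lambda>i::nat. 2 * i + 1) \<subseteq> {x. odd x}" by auto
  moreover have "infinite (range (\<lambda>i::nat. 2 * i + 1))" by (rule range_inj_infinite) (simp add: inj_def)
  ultimately show ?thesis using infinite_super by blast
qed

lemma PI_iso: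
  assumes c: "strict_mono c" and ev: "\<forall>i. even (c i)"
  shows "iso (PI c) RI"
proof -
  have ic: "inj_on c UNIV" using strict_mono_imp_inj_on[OF c] .
  have i2: "inj_on (\<lambda>i::nat. 2 * i) UNIV" by (simp add: inj_on_def)
  have "{x. odd x} \<subseteq> -(range c)" using ev by auto
  hence a: "infinite (-(range c))" using infinite_odd infinite_super by blast
  have "{x. odd x} \<subseteq> -(range (\<lambda>i::nat. 2 * i))" by auto
  hence b: "infinite (-(range (\<lambda>i::nat. 2 * i)))" using infinite_odd infinite_super by blast
  obtain f where f: "bij f" "\<forall>i\<in>UNIV. f (c i) = 2 * i" "\<forall>x. x \<notin> range c \<longrightarrow> f x \<notin> range (\<lambda>i::nat. 2 * i)"
    using mk_bij[OF ic i2 a b] by blast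
  have fc: "\<And>i. f (c i) = 2 * i" using f(2) by simp
  have inA: "\<And>x. even (f x) \<Longrightarrow> \<exists>i. x = c i"
  proof -
    fix x assume "even (f x)"
    hence "f x \<in> range (\<lambda>i::nat. 2 * i)" by (metis evenE rangeI)
    thus "\<exists>i. x = c i" using f(3) by blast
  qed
  show ?thesis unfolding PI_def RI_def
  proof (rule graph_iso[OF f(1)])
    fix a b
    show "(\<exists>i. a = c i \<and> b = c (Suc i) \<or> b = c i \<and> a = c (Suc i)) \<longleftrightarrow>
          (even (f a) \<and> even (f b) \<and> (f a + 2 = f b \<or> f b + 2 = f a))"
    proof
      assume "\<exists>i. a = c i \<and> b = c (Suc i) \<or> b = c i \<and> a = c (Suc i)"
      then obtain i where "a = c i \<and> b = c (Suc i) \<or> b = c i \<and> a = c (Suc i)" by blast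
      thus "even (f a) \<and> even (f b) \<and> (f a + 2 = f b \<or> f b + 2 = f a)" using fc by auto
    next
      assume h: "even (f a) \<and> even (f b) \<and> (f a + 2 = f b \<or> f b + 2 = f a)"
      obtain i where i: "a = c i" using inA h by blast
      obtain j where j: "b = c j" using inA h by blast
      have "2 * i + 2 = 2 * j \<or> 2 * j + 2 = 2 * i" using h i j fc by simp
      hence "j = Suc i \<or> i = Suc j" by auto
      thus "\<exists>i. a = c i \<and> b = c (Suc i) \<or> b = c i \<and> a = c (Suc i)" using i j by blast
    qed
  qed
qed

definition bnd :: "(struc \<Rightarrow> nat \<Rightarrow> nat) \<Rightarrow> struc \<Rightarrow> nat \<Rightarrow> nat" where
  "bnd \<Gamma> T m = (SOME B. \<forall>S\<in>LD K3. (\<forall>x. (\<forall>v\<in>set (snd x). v \<le> B) \<longrightarrow> S x = T x) \<longrightarrow> \<Gamma> S m = \<Gamma> T m)"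

definition idx :: "(struc \<Rightarrow> nat \<Rightarrow> nat) \<Rightarrow> struc \<Rightarrow> nat \<Rightarrow> nat" where
  "idx \<Gamma> T k = (SOME m. m \<ge> k \<and> \<Gamma> T m \<noteq> \<Gamma> RI m)"

definition nextv :: "(struc \<Rightarrow> nat \<Rightarrow> nat) \<Rightarrow> nat list \<Rightarrow> nat" where
  "nextv \<Gamma> xs = 2 * (bnd \<Gamma> (PT (\<lambda>i. xs ! i) (length xs - 1))
       (idx \<Gamma> (PT (\<lambda>i. xs ! i) (length xs - 1)) (length xs)) + last xs + 1)"

primrec pth :: "(struc \<Rightarrow> nat \<Rightarrow> nat) \<Rightarrow> nat \<Rightarrow> nat list" where
  "pth \<Gamma> 0 = [0]"
| "pth \<Gamma> (Suc k) = pth \<Gamma> k @ [nextv \<Gamma> (pth \<Gamma> k)]"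

definition cc :: "(struc \<Rightarrow> nat \<Rightarrow> nat) \<Rightarrow> nat \<Rightarrow> nat" where
  "cc \<Gamma> i = last (pth \<Gamma> i)"

lemma pth_len: "length (pth \<Gamma> k) = Suc k"
  by (induction k) auto

lemma pth_nth: "i \<le> k \<Longrightarrow> pth \<Gamma> k ! i = cc \<Gamma> i"
proof (induction k)
  case 0 thus ?case by (simp add: cc_def)
next
  case (Suc k)
  show ?case
  proof (cases "i \<le> k")
    case True
    thus ?thesis using Suc pth_len[of \<Gamma> k] by (simp add: nth_append)
  next
    case False
    hence "i = Suc k" using Suc by simp
    thus ?thesis using pth_len[of \<Gamma> k] by (simp add: nth_append cc_def)
  qed
qed

lemma PT_cong: "(\<And>i. i \<le> L \<Longrightarrow> c i = c' i) \<Longrightarrow> PT c L = PT c' L"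
proof -
  assume h: "\<And>i. i \<le> L \<Longrightarrow> c i = c' i"
  have "(\<lambda>a b. \<exists>i<L. (a = c i \<and> b = c (Suc i)) \<or> (b = c i \<and> a = c (Suc i)))
      = (\<lambda>a b. \<exists>i<L. (a = c' i \<and> b = c' (Suc i)) \<or> (b = c' i \<and> a = c' (Suc i)))"
  proof (intro ext)
    fix a b
    have h': "\<And>i. i < L \<Longrightarrow> c i = c' i \<and> c (Suc i) = c' (Suc i)"
      using h by (simp add: Suc_leI less_imp_le_nat)
    show "(\<exists>i<L. (a = c i \<and> b = c (Suc i)) \<or> (b = c i \<and> a = c (Suc i)))
      = (\<exists>i<L. (a = c' i \<and> b = c' (Suc i)) \<or> (b = c' i \<and> a = c' (Suc i)))"
    proof
      assume "\<exists>i<L. (a = c i \<and> b = c (Suc i)) \<or> (b = c i \<and> a = c (Suc i))"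
      then obtain i where "i < L" "(a = c i \<and> b = c (Suc i)) \<or> (b = c i \<and> a = c (Suc i))" by blast
      thus "\<exists>i<L. (a = c' i \<and> b = c' (Suc i)) \<or> (b = c' i \<and> a = c' (Suc i))" using h' by metis
    next
      assume "\<exists>i<L. (a = c' i \<and> b = c' (Suc i)) \<or> (b = c' i \<and> a = c' (Suc i))"
      then obtain i where "i < L" "(a = c' i \<and> b = c' (Suc i)) \<or> (b = c' i \<and> a = c' (Suc i))" by blast
      thus "\<exists>i<L. (a = c i \<and> b = c (Suc i)) \<or> (b = c i \<and> a = c (Suc i))" using h' by metis
    qed
  qed
  thus ?thesis unfolding PT_def by simp
qed

lemma cc_Suc: "cc \<Gamma> (Suc k) = 2 * (bnd \<Gamma> (PT (cc \<Gamma>) k) (idx \<Gamma> (PT (cc \<Gamma>) k) (Suc k)) + cc \<Gamma> k + 1)"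
proof -
  have l: "length (pth \<Gamma> k) - 1 = k" by (simp add: pth_len)
  have p: "PT (\<lambda>i. pth \<Gamma> k ! i) k = PT (cc \<Gamma>) k"
    by (rule PT_cong) (simp add: pth_nth)
  have "cc \<Gamma> (Suc k) = nextv \<Gamma> (pth \<Gamma> k)" by (simp add: cc_def)
  also have "\<dots> = 2 * (bnd \<Gamma> (PT (\<lambda>i. pth \<Gamma> k ! i) k)
       (idx \<Gamma> (PT (\<lambda>i. pth \<Gamma> k ! i) k) (Suc k)) + last (pth \<Gamma> k) + 1)"
    unfolding nextv_def l by (simp add: pth_len)
  also have "\<dots> = 2 * (bnd \<Gamma> (PT (cc \<Gamma>) k) (idx \<Gamma> (PT (cc \<Gamma>) k) (Suc k)) + cc \<Gamma> k + 1)"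
    unfolding p cc_def ..
  finally show ?thesis .
qed

lemma cc_mono: "strict_mono (cc \<Gamma>)"
  by (rule strict_monoI_Suc) (simp add: cc_Suc)

lemma cc_even: "even (cc \<Gamma> i)"
proof (cases i)
  case 0 thus ?thesis by (simp add: cc_def)
next
  case (Suc j) thus ?thesis by (simp add: cc_Suc)
qed

lemma cc_bnd: "bnd \<Gamma> (PT (cc \<Gamma>) k) (idx \<Gamma> (PT (cc \<Gamma>) k) (Suc k)) < cc \<Gamma> (Suc k)"
  by (simp add: cc_Suc)

lemma not_E0_K3: "\<not> learnable baire E0 K3"
proof
  assume "learnable baire E0 K3"
  then obtain \<Gamma> where cont: "continuous_map (subtopology struc_top (LD K3)) baire \<Gamma>"
    and iff: "\<forall>S\<in>LD K3. \<forall>S'\<in>LD K3. iso S S' \<longleftrightarrow> E0 (\<Gamma> S) (\<Gamma> S')"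
    unfolding learnable_def by blast
  define c where "c = cc \<Gamma>"
  have RIin: "RI \<in> LD K3" unfolding LD_def K3_def using iso_refl by blast
  have PIin: "PI c \<in> LD K3" unfolding LD_def K3_def c_def using PI_iso[OF cc_mono] cc_even by blast
  have "E0 (\<Gamma> (PI c)) (\<Gamma> RI)" using iff PIin RIin PI_iso[OF cc_mono] cc_even c_def by blast
  then obtain M where M: "\<forall>n\<ge>M. \<Gamma> (PI c) n = \<Gamma> RI n" unfolding E0_def by blast
  define k where "k = Suc M"
  define T where "T = PT c k"
  have Tiso: "iso T (RnI (Suc k))" unfolding T_def c_def by (rule PT_iso[OF cc_mono])
  have Tin: "T \<in> LD K3" unfolding LD_def K3_def using Tiso k_def by auto
  have "\<not> iso T RI"
  proof
    assume "iso T RI"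
    hence "iso (RnI (Suc k)) RI" using Tiso iso_sym iso_trans by blast
    hence "good (RnI (Suc k)) (Suc (Suc k))" using good_RI good_iso by blast
    thus False using good_RnI[of "Suc k"] k_def by simp
  qed
  hence "\<not> E0 (\<Gamma> T) (\<Gamma> RI)" using iff Tin RIin by blast
  hence "\<exists>m. m \<ge> Suc k \<and> \<Gamma> T m \<noteq> \<Gamma> RI m" unfolding E0_def by (meson linorder_not_le)
  hence mk: "idx \<Gamma> T (Suc k) \<ge> Suc k \<and> \<Gamma> T (idx \<Gamma> T (Suc k)) \<noteq> \<Gamma> RI (idx \<Gamma> T (Suc k))"
    unfolding idx_def by (rule someI_ex)
  define m where "m = idx \<Gamma> T (Suc k)"
  obtain F where F: "finite F" "\<forall>S\<in>LD K3. (\<forall>x\<in>F. S x = T x) \<longrightarrow> \<Gamma> S m = \<Gamma> T m"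
    using local_nbhd[OF cont Tin] by blast
  obtain B0 where B0: "\<forall>x\<in>F. \<forall>v\<in>set (snd x). v \<le> B0" using fin_bound[OF F(1)] by blast
  have "\<forall>S\<in>LD K3. (\<forall>x. (\<forall>v\<in>set (snd x). v \<le> B0) \<longrightarrow> S x = T x) \<longrightarrow> \<Gamma> S m = \<Gamma> T m"
  proof (intro ballI impI)
    fix S assume S: "S \<in> LD K3" and h: "\<forall>x. (\<forall>v\<in>set (snd x). v \<le> B0) \<longrightarrow> S x = T x"
    have "\<forall>x\<in>F. S x = T x" using h B0 by blast
    thus "\<Gamma> S m = \<Gamma> T m" using F(2) S by blast
  qed
  hence "\<exists>B. \<forall>S\<in>LD K3. (\<forall>x. (\<forall>v\<in>set (snd x). v \<le> B) \<longrightarrow> S x = T x) \<longrightarrow> \<Gamma> S m = \<Gamma> T m"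
    by (rule exI)
  hence bB: "\<forall>S\<in>LD K3. (\<forall>x. (\<forall>v\<in>set (snd x). v \<le> bnd \<Gamma> T m) \<longrightarrow> S x = T x) \<longrightarrow> \<Gamma> S m = \<Gamma> T m"
    unfolding bnd_def by (rule someI_ex)
  define B where "B = bnd \<Gamma> T m"
  have Blt: "B < c (Suc k)" unfolding B_def m_def T_def c_def by (rule cc_bnd)
  have cm: "strict_mono c" unfolding c_def by (rule cc_mono)
  have agree: "\<forall>x. (\<forall>v\<in>set (snd x). v \<le> B) \<longrightarrow> PI c x = T x"
  proof (intro allI impI)
    fix x :: "nat \<times> nat list" assume xb: "\<forall>v\<in>set (snd x). v \<le> B"
    show "PI c x = T x" unfolding PI_def T_def PT_def
    proof (rule graph_agree[OF _ xb])
      fix a b assume ab: "a \<le> B" "b \<le> B"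
      show "(\<exists>i. a = c i \<and> b = c (Suc i) \<or> b = c i \<and> a = c (Suc i)) \<longleftrightarrow>
            (\<exists>i<k. a = c i \<and> b = c (Suc i) \<or> b = c i \<and> a = c (Suc i))"
      proof
        assume "\<exists>i. a = c i \<and> b = c (Suc i) \<or> b = c i \<and> a = c (Suc i)"
        then obtain i where i: "a = c i \<and> b = c (Suc i) \<or> b = c i \<and> a = c (Suc i)" by blast
        have "i < k"
        proof (rule ccontr)
          assume "\<not> i < k"
          hence "c (Suc k) \<le> c (Suc i)" using cm by (simp add: strict_mono_less_eq)
          moreover have "c (Suc i) \<le> B" using i ab by auto
          ultimately show False using Blt by linarith
        qed
        thus "\<exists>i<k. a = c i \<and> b = c (Suc i) \<or> b = c i \<and> a = c (Suc i)" using i by blast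
      qed blast
    qed
  qed
  have ag2: "\<forall>x. (\<forall>v\<in>set (snd x). v \<le> bnd \<Gamma> T m) \<longrightarrow> PI c x = T x"
    using agree unfolding B_def .
  have "(\<forall>x. (\<forall>v\<in>set (snd x). v \<le> bnd \<Gamma> T m) \<longrightarrow> PI c x = T x) \<longrightarrow> \<Gamma> (PI c) m = \<Gamma> T m"
    using bB PIin by (rule bspec)
  hence e1: "\<Gamma> (PI c) m = \<Gamma> T m" using ag2 by (rule mp)
  have "m \<ge> M" using mk unfolding m_def k_def by simp
  hence e2: "\<Gamma> (PI c) m = \<Gamma> RI m" using M by blast
  have "\<Gamma> T m \<noteq> \<Gamma> RI m" using mk unfolding m_def by blast
  thus False using e1 e2 by simp
qed

theorem mainTheorem8:
  shows "(\<exists>sig K. family sig K \<and> learnable baire E0 K \<and> \<not> learnable baire Erange K)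
    \<and> (\<exists>sig K. family sig K \<and> learnable baire Erange K \<and> \<not> learnable baire E0 K)
    \<and> (let K = RnI ` {n. n \<ge> 2} \<union> {RI} in
         family [2] K \<and> learnable baire Erange K \<and> \<not> learnable baire E0 K)"
proof -
  have A: "family [2] K3 \<and> learnable baire Erange K3 \<and> \<not> learnable baire E0 K3"
    using family_K3 Erange_learn_K3 not_E0_K3 by (intro conjI)
  hence B: "\<exists>sig K. family sig K \<and> learnable baire Erange K \<and> \<not> learnable baire E0 K"
    by (intro exI)
  show ?thesis unfolding Let_def K3_def[symmetric] using part1 B A by blast
qed

end
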